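(* Let $q\ge2$ and let $U$ be a $q\times q$ row-stochastic matrix with strictly positive entries. There is a constant $C_4$ independent of $n$ such that for all sufficiently large $n$ the following holds. Let $k\ge1$, let $\mathbf{t}_1,\mathbf{t}_1',\dots,\mathbf{t}_k,\mathbf{t}_k'\in\mathcal{N}_{q,n}$, let $p_1,\dots,p_k\ge0$, and let $Q_1,Q_2$ be distributions on $\mathcal{N}_{q,n}$ with $$Q_2(\mathbf{t})=Q_1(\mathbf{t})+\sum_{i=1}^kp_i\big(\mathbb{1}\{\mathbf{t}=\mathbf{t}_i'\}-\mathbb{1}\{\mathbf{t}=\mathbf{t}_i\}\big)\quad\forall\mathbf{t}\in\mathcal{N}_{q,n}.$$ If $Q_{\mathrm{op},1},Q_{\mathrm{op},2}$ are the output distributions of $q$-NCC$_{n,U}$ for inputs $Q_1,Q_2$, then $$d_{\mathrm{TV}}(Q_{\mathrm{op},1},Q_{\mathrm{op},2})\le\frac{C_4(\log n)^{(q-2)/2}}{\sqrt n}\sum_{i=1}^kp_i\,d_{\mathrm c}(\mathbf{t}_i,\mathbf{t}_i').$$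
   Context: $\mathcal{N}_{q,n}=\{\mathbf{t}\in\mathbb{Z}_{\ge0}^q:\sum_it_i=n\}$ is the set of compositions of vectors in $[1:q]^n$ (composition of $\mathbf{x}$: $(N(1|\mathbf{x}),\dots,N(q|\mathbf{x}))$, $N(c|\mathbf{x})=|\{i:x_i=c\}|$). The $q$-ary noisy composition channel $q$-NCC$_{n,U}$ has input/output alphabet $\mathcal{N}_{q,n}$ and $P_{q\text{-NC}}(\mathbf{w}|\mathbf{t})=\sum_{\mathbf{z}\text{ of composition }\mathbf{w}}\prod_iU(z_i|x_i)$ for any $\mathbf{x}$ of composition $\mathbf{t}$; the output distribution for input distribution $Q$ is $\sum_{\mathbf{t}}Q(\mathbf{t})P_{q\text{-NC}}(\cdot|\mathbf{t})$. $d_{\mathrm c}(\mathbf{t},\mathbf{t}')=\frac12\sum_i|t_i-t_i'|$. $d_{\mathrm{TV}}(P,Q)=\frac12\sum|P-Q|$. Logarithms base 2. *)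

theory Defs
  imports "HOL-Analysis.Analysis"
begin

text \<open>Alphabet [1:q] is represented 0-indexed as {0..<q}. Vectors in [1:q]^n are lists
of length n with entries < q. A composition is a function nat => nat vanishing outside {0..<q}.\<close>

definition words :: "nat \<Rightarrow> nat \<Rightarrow> nat list set" where
  "words q n = {xs. length xs = n \<and> set xs \<subseteq> {..<q}}"

definition composition :: "nat list \<Rightarrow> (nat \<Rightarrow> nat)" where
  "composition xs = (\<lambda>c. count_list xs c)"

definition comps :: "nat \<Rightarrow> nat \<Rightarrow> (nat \<Rightarrow> nat) set" where
  "comps q n = {t. (\<forall>i\<ge>q. t i = 0) \<and> (\<Sum>i<q. t i) = n}"

text \<open>U a b = U(b|a): probability that input symbol a is output as b.\<close>
definition ncc :: "nat \<Rightarrow> nat \<Rightarrow> (nat \<Rightarrow> nat \<Rightarrow> real) \<Rightarrow> (nat \<Rightarrow> nat) \<Rightarrow> (nat \<Rightarrow> nat) \<Rightarrow> real" where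
  "ncc q n U w t =
     (let x = (SOME x. x \<in> words q n \<and> composition x = t) in
      \<Sum>z\<in>{z \<in> words q n. composition z = w}. \<Prod>i<n. U (x ! i) (z ! i))"

definition ncc_output :: "nat \<Rightarrow> nat \<Rightarrow> (nat \<Rightarrow> nat \<Rightarrow> real) \<Rightarrow> ((nat \<Rightarrow> nat) \<Rightarrow> real) \<Rightarrow> (nat \<Rightarrow> nat) \<Rightarrow> real" where
  "ncc_output q n U Q w = (\<Sum>t\<in>comps q n. Q t * ncc q n U w t)"

definition is_dist :: "nat \<Rightarrow> nat \<Rightarrow> ((nat \<Rightarrow> nat) \<Rightarrow> real) \<Rightarrow> bool" where
  "is_dist q n Q \<longleftrightarrow> (\<forall>t\<in>comps q n. Q t \<ge> 0) \<and> (\<Sum>t\<in>comps q n. Q t) = 1"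

definition d_tv :: "nat \<Rightarrow> nat \<Rightarrow> ((nat \<Rightarrow> nat) \<Rightarrow> real) \<Rightarrow> ((nat \<Rightarrow> nat) \<Rightarrow> real) \<Rightarrow> real" where
  "d_tv q n P Q = (1/2) * (\<Sum>w\<in>comps q n. \<bar>P w - Q w\<bar>)"

definition d_c :: "nat \<Rightarrow> (nat \<Rightarrow> nat) \<Rightarrow> (nat \<Rightarrow> nat) \<Rightarrow> real" where
  "d_c q t t' = (1/2) * (\<Sum>i<q. \<bar>real (t i) - real (t' i)\<bar>)"

end

theory Submission imports Defs "HOL-Combinatorics.Permutations"
begin

definition W :: "nat \<Rightarrow> nat \<Rightarrow> (nat \<Rightarrow> nat) \<Rightarrow> nat list set" where
  "W q n w = {z \<in> words q n. composition z = w}"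

definition PP :: "nat \<Rightarrow> (nat \<Rightarrow> nat \<Rightarrow> real) \<Rightarrow> nat list \<Rightarrow> (nat \<Rightarrow> nat) \<Rightarrow> real" where
  "PP q U x w = (\<Sum>z\<in>W q (length x) w. \<Prod>i<length x. U (x ! i) (z ! i))"

lemma finite_words: "finite (words q n)"
proof -
  have "words q n = {xs. set xs \<subseteq> {..<q} \<and> length xs = n}" unfolding words_def by auto
  thus ?thesis using finite_lists_length_eq[of "{..<q}" n] by simp
qed

lemma finite_W: "finite (W q n w)"
  unfolding W_def using finite_words by simp

lemma composition_mset: "composition z = (\<lambda>c. count (mset z) c)"
  unfolding composition_def by (simp add: count_mset)

lemma composition_Cons: "composition (d # z) = (composition z)(d := composition z d + 1)"
  unfolding composition_def by auto

lemma composition_Cons_eq: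
  "composition (d # z) = w \<longleftrightarrow> w d > 0 \<and> composition z = w(d := w d - 1)"
  unfolding composition_Cons by (auto simp: fun_eq_iff split: if_splits)

lemma words_Suc: "words q (Suc n) = (\<lambda>(d,z). d # z) ` ({..<q} \<times> words q n)"
proof -
  have "xs \<in> (\<lambda>(d,z). d # z) ` ({..<q} \<times> words q n)" if "xs \<in> words q (Suc n)" for xs
    using that unfolding words_def by (cases xs) (auto intro!: image_eqI)
  thus ?thesis unfolding words_def by auto
qed

lemma sum_words_prod:
  "(\<Sum>z\<in>words q n. \<Prod>k<n. f k (z ! k)) = (\<Prod>k<n. \<Sum>c<q. (f k c :: real))"
proof (induction n arbitrary: f)
  case 0
  have "words q 0 = {[]}" unfolding words_def by auto
  thus ?case by simp
next
  case (Suc n)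
  have inj: "inj_on (\<lambda>(d,z). d # z) ({..<q} \<times> words q n)" by (auto simp: inj_on_def)
  have "(\<Sum>z\<in>words q (Suc n). \<Prod>k<Suc n. f k (z ! k))
     = (\<Sum>(d,z)\<in>{..<q} \<times> words q n. \<Prod>k<Suc n. f k ((d#z) ! k))"
    unfolding words_Suc by (subst sum.reindex[OF inj]) (simp add: case_prod_unfold)
  also have "\<dots> = (\<Sum>d<q. \<Sum>z\<in>words q n. f 0 d * (\<Prod>k<n. f (Suc k) (z ! k)))"
    by (subst sum.cartesian_product[symmetric]) (simp del: prod.lessThan_Suc add: prod.lessThan_Suc_shift)
  also have "\<dots> = (\<Sum>d<q. f 0 d) * (\<Prod>k<n. \<Sum>c<q. f (Suc k) c)"
    using Suc.IH[of "\<lambda>k. f (Suc k)"] by (simp add: sum_distrib_left[symmetric] sum_distrib_right)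
  also have "\<dots> = (\<Prod>k<Suc n. \<Sum>c<q. f k c)"
    by (simp del: prod.lessThan_Suc add: prod.lessThan_Suc_shift)
  finally show ?case .
qed

lemma W_Suc_sum:
  "(\<Sum>z\<in>W q (Suc n) w. g z) =
   (\<Sum>d<q. if w d > 0 then (\<Sum>z\<in>W q n (w(d := w d - 1)). g (d # z)) else (0::real))"
proof -
  let ?S = "SIGMA d:{d. d < q \<and> w d > 0}. W q n (w(d := w d - 1))"
  have eq: "W q (Suc n) w = (\<lambda>(d,z). d # z) ` ?S"
  proof -
    have "xs \<in> (\<lambda>(d,z). d # z) ` ?S" if "xs \<in> W q (Suc n) w" for xs
      using that unfolding W_def words_def
      by (cases xs) (auto simp: composition_Cons_eq intro!: image_eqI)
    moreover have "(\<lambda>(d,z). d # z) ` ?S \<subseteq> W q (Suc n) w"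
      unfolding W_def words_def by (auto simp: composition_Cons_eq)
    ultimately show ?thesis by blast
  qed
  have inj: "inj_on (\<lambda>(d,z). d # z) ?S" by (auto simp: inj_on_def)
  have "(\<Sum>z\<in>W q (Suc n) w. g z) = (\<Sum>(d,z)\<in>?S. g (d # z))"
    unfolding eq by (subst sum.reindex[OF inj]) (simp add: case_prod_unfold)
  also have "\<dots> = (\<Sum>d\<in>{d. d < q \<and> w d > 0}. \<Sum>z\<in>W q n (w(d := w d - 1)). g (d # z))"
    by (subst sum.Sigma[symmetric]) (auto simp: finite_W)
  also have "\<dots> = (\<Sum>d<q. if w d > 0 then (\<Sum>z\<in>W q n (w(d := w d - 1)). g (d # z)) else 0)"
    by (subst sum.inter_filter[symmetric]) (auto intro: sum.cong)
  finally show ?thesis .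
qed

lemma PP_Cons:
  "PP q U (c # r) w = (\<Sum>d<q. U c d * (if w d > 0 then PP q U r (w(d := w d - 1)) else 0))"
  unfolding PP_def
  apply (simp del: prod.lessThan_Suc add: W_Suc_sum prod.lessThan_Suc_shift)
  apply (rule sum.cong, simp)
  apply (auto simp: sum_distrib_left)
  done

lemma perm_W:
  assumes p: "\<sigma> permutes {..<n}"
  shows "(\<Sum>z\<in>W q n w. g z) = (\<Sum>z\<in>W q n w. (g (permute_list \<sigma> z) :: real))"
proof -
  let ?h = "permute_list \<sigma>"
  have sub: "?h ` W q n w \<subseteq> W q n w"
  proof
    fix y assume "y \<in> ?h ` W q n w"
    then obtain z where z: "z \<in> W q n w" "y = ?h z" by blast
    have pz: "\<sigma> permutes {..<length z}" using z p unfolding W_def words_def by simp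
    show "y \<in> W q n w" using z pz unfolding W_def words_def
      by (simp add: composition_mset)
  qed
  have inj: "inj_on ?h (W q n w)"
  proof (rule inj_onI)
    fix z1 z2 assume z1: "z1 \<in> W q n w" and z2: "z2 \<in> W q n w" and eq: "?h z1 = ?h z2"
    have l1: "length z1 = n" and l2: "length z2 = n" using z1 z2 unfolding W_def words_def by auto
    show "z1 = z2"
    proof (rule nth_equalityI)
      show "length z1 = length z2" using l1 l2 by simp
      fix i assume "i < length z1"
      then have "i \<in> \<sigma> ` {..<n}" using permutes_image[OF p] l1 by simp
      then obtain j where j: "j < n" "i = \<sigma> j" by auto
      have "?h z1 ! j = ?h z2 ! j" using eq by simp
      thus "z1 ! i = z2 ! i" using j l1 l2 p by (simp add: permute_list_nth)
    qed
  qed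
  have "?h ` W q n w = W q n w" using endo_inj_surj[OF finite_W sub inj] .
  hence "(\<Sum>z\<in>W q n w. g z) = (\<Sum>z\<in>?h ` W q n w. g z)" by simp
  also have "\<dots> = (\<Sum>z\<in>W q n w. g (?h z))" by (simp add: sum.reindex[OF inj])
  finally show ?thesis .
qed

lemma PP_mset:
  assumes "mset x = mset y"
  shows "PP q U x w = PP q U y w"
proof -
  obtain p where p: "p permutes {..<length y}" "permute_list p y = x"
    using mset_eq_permutation[OF assms] by blast
  have len: "length x = length y" using p by auto
  let ?n = "length y"
  have "PP q U x w = (\<Sum>z\<in>W q ?n w. \<Prod>i<?n. U (y ! p i) (z ! i))"
    unfolding PP_def len using p by (auto simp: permute_list_nth intro!: sum.cong prod.cong)
  also have "\<dots> = (\<Sum>z\<in>W q ?n w. \<Prod>i<?n. U (y ! p i) (permute_list p z ! i))"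
    by (rule perm_W[OF p(1)])
  also have "\<dots> = (\<Sum>z\<in>W q ?n w. \<Prod>i<?n. U (y ! p i) (z ! p i))"
    using p(1) by (auto simp: W_def words_def permute_list_nth intro!: sum.cong prod.cong)
  also have "\<dots> = (\<Sum>z\<in>W q ?n w. \<Prod>i<?n. U (y ! i) (z ! i))"
    using prod.permute[OF p(1), of "\<lambda>i. U (y ! i) (_ ! i)"] by (simp add: comp_def)
  also have "\<dots> = PP q U y w" unfolding PP_def ..
  finally show ?thesis .
qed

lemma PP_comp:
  assumes "composition x = composition y"
  shows "PP q U x w = PP q U y w"
  using assms by (intro PP_mset) (simp add: composition_mset multiset_eq_iff fun_eq_iff)

lemma exists_word:
  assumes "\<forall>i\<ge>q. s i = 0"
  shows "\<exists>r. set r \<subseteq> {..<q} \<and> composition r = s"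
  using assms
proof (induction "\<Sum>i<q. s i" arbitrary: s)
  case 0
  have "s i = 0" for i
  proof (cases "i < q")
    case True thus ?thesis using "0.hyps" by (simp add: sum_eq_0_iff)
  next
    case False thus ?thesis using "0.prems" by simp
  qed
  then have "s = (\<lambda>_. 0)" by (simp add: fun_eq_iff)
  then show ?case by (intro exI[of _ "[]"]) (simp add: composition_def)
next
  case (Suc N)
  have "\<exists>c<q. s c > 0"
  proof (rule ccontr)
    assume "\<not> ?thesis"
    hence "(\<Sum>i<q. s i) = 0" by (intro sum.neutral) auto
    thus False using Suc.hyps(2) by simp
  qed
  then obtain c where c: "c < q" "s c > 0" by blast
  define s' where "s' = s(c := s c - 1)"
  have "(\<Sum>i<q. s i) = s c + (\<Sum>i\<in>{..<q}-{c}. s i)" using c by (simp add: sum.remove)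
  moreover have "(\<Sum>i<q. s' i) = s' c + (\<Sum>i\<in>{..<q}-{c}. s' i)" using c by (simp add: sum.remove)
  moreover have "(\<Sum>i\<in>{..<q}-{c}. s' i) = (\<Sum>i\<in>{..<q}-{c}. s i)" unfolding s'_def by (rule sum.cong) auto
  ultimately have "N = (\<Sum>i<q. s' i)" using Suc.hyps(2) c unfolding s'_def by simp
  moreover have "\<forall>i\<ge>q. s' i = 0" using Suc.prems c unfolding s'_def by auto
  ultimately obtain r where r: "set r \<subseteq> {..<q}" "composition r = s'" using Suc.hyps(1) by blast
  have "composition (c # r) = s" using r c unfolding composition_Cons_eq s'_def by auto
  thus ?case using r c by (intro exI[of _ "c # r"]) auto
qed

lemma length_word:
  assumes "set r \<subseteq> {..<q}"
  shows "length r = (\<Sum>i<q. composition r i)"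
  using sum_count_set[OF assms] unfolding composition_def by simp

lemma exists_word_comps:
  assumes "s \<in> comps q n"
  obtains r where "r \<in> words q n" "composition r = s"
proof -
  obtain r where r: "set r \<subseteq> {..<q}" "composition r = s"
    using exists_word[of q s] assms unfolding comps_def by auto
  have "length r = n" using length_word[OF r(1)] r(2) assms unfolding comps_def by simp
  thus ?thesis using that r unfolding words_def by auto
qed

lemma composition_in_comps:
  assumes "z \<in> words q n" shows "composition z \<in> comps q n"
proof -
  have s: "set z \<subseteq> {..<q}" and l: "length z = n" using assms unfolding words_def by auto
  have "\<forall>i\<ge>q. composition z i = 0"
  proof (intro allI impI)
    fix i assume "q \<le> i"
    hence "i \<notin> set z" using s by auto
    thus "composition z i = 0" unfolding composition_def by (simp add: count_list_0_iff)
  qed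
  moreover have "(\<Sum>i<q. composition z i) = n" using length_word[OF s] l by linarith
  ultimately show ?thesis unfolding comps_def by blast
qed

lemma finite_comps: "finite (comps q n)"
proof -
  have "comps q n \<subseteq> composition ` words q n"
  proof
    fix s assume "s \<in> comps q n"
    then obtain r where "r \<in> words q n" "composition r = s" by (rule exists_word_comps)
    thus "s \<in> composition ` words q n" by blast
  qed
  thus ?thesis using finite_words finite_subset by blast
qed

lemma ncc_PP:
  assumes "t \<in> comps q n" "y \<in> words q n" "composition y = t"
  shows "ncc q n U w t = PP q U y w"
proof -
  define x where "x = (SOME x. x \<in> words q n \<and> composition x = t)"
  have ex: "\<exists>x. x \<in> words q n \<and> composition x = t" using assms by blast
  have xp: "x \<in> words q n \<and> composition x = t" unfolding x_def by (rule someI_ex[OF ex])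
  have len: "length x = n" using xp unfolding words_def by simp
  have "ncc q n U w t = PP q U x w" unfolding ncc_def PP_def W_def Let_def len x_def[symmetric] ..
  also have "\<dots> = PP q U y w" using xp assms(3) by (intro PP_comp) simp
  finally show ?thesis .
qed

definition EE :: "nat \<Rightarrow> (nat \<Rightarrow> nat \<Rightarrow> real) \<Rightarrow> nat list \<Rightarrow> (nat list \<Rightarrow> real) \<Rightarrow> real" where
  "EE q U x g = (\<Sum>z\<in>words q (length x). (\<Prod>k<length x. U (x ! k) (z ! k)) * g z)"

lemma EE_add: "EE q U x (\<lambda>z. f z + g z) = EE q U x f + EE q U x g"
  unfolding EE_def by (simp add: distrib_left sum.distrib)

lemma EE_diff: "EE q U x (\<lambda>z. f z - g z) = EE q U x f - EE q U x g"
  unfolding EE_def by (simp add: right_diff_distrib sum_subtractf)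

lemma EE_scale: "EE q U x (\<lambda>z. c * f z) = c * EE q U x f"
  unfolding EE_def by (simp add: sum_distrib_left mult_ac)

lemma EE_sum: "EE q U x (\<lambda>z. \<Sum>i\<in>I. f i z) = (\<Sum>i\<in>I. EE q U x (f i))"
  unfolding EE_def by (simp add: sum_distrib_left sum.swap[of _ I])

context
  fixes q :: nat and U :: "nat \<Rightarrow> nat \<Rightarrow> real" and u :: real
  assumes upos: "u > 0"
    and ulow: "\<And>a b. a < q \<Longrightarrow> b < q \<Longrightarrow> U a b \<ge> u"
    and usum: "\<And>a. a < q \<Longrightarrow> (\<Sum>b<q. U a b) = 1"
begin

lemma U_pos: "a < q \<Longrightarrow> b < q \<Longrightarrow> U a b > 0"
  using ulow upos by (meson less_le_trans)

lemma weight_nonneg: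
  assumes "set x \<subseteq> {..<q}" "z \<in> words q (length x)"
  shows "(\<Prod>k<length x. U (x ! k) (z ! k)) \<ge> 0"
proof -
  have "U (x ! k) (z ! k) \<ge> 0" if "k \<in> {..<length x}" for k
  proof -
    have "x ! k < q" "z ! k < q" using assms that unfolding words_def by (auto simp: subset_iff)
    thus ?thesis using U_pos by (simp add: less_imp_le)
  qed
  thus ?thesis by (intro prod_nonneg) auto
qed

lemma EE_mono:
  assumes "set x \<subseteq> {..<q}" "\<And>z. z \<in> words q (length x) \<Longrightarrow> f z \<le> g z"
  shows "EE q U x f \<le> EE q U x g"
  unfolding EE_def using assms weight_nonneg
  by (intro sum_mono mult_left_mono) auto

lemma EE_prod_ind:
  assumes x: "set x \<subseteq> {..<q}" and S: "S \<subseteq> {..<length x}" and d: "d < q"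
  shows "EE q U x (\<lambda>z. \<Prod>k\<in>S. if z ! k = d then 1 else 0) = (\<Prod>k\<in>S. U (x ! k) d)"
proof -
  let ?n = "length x"
  define f where "f k c = U (x ! k) c * (if k \<in> S then (if c = d then 1 else 0) else 1)" for k c
  have "EE q U x (\<lambda>z. \<Prod>k\<in>S. if z ! k = d then 1 else 0) = (\<Sum>z\<in>words q ?n. \<Prod>k<?n. f k (z ! k))"
    unfolding EE_def
  proof (rule sum.cong[OF refl])
    fix z
    have "(\<Prod>k\<in>S. if z ! k = d then 1 else (0::real)) = (\<Prod>k<?n. if k \<in> S then (if z ! k = d then 1 else 0) else 1)"
      using S prod.inter_restrict[of "{..<?n}" "\<lambda>k. if z ! k = d then 1 else (0::real)" S]
      by (simp add: Int_absorb1)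
    thus "(\<Prod>k<?n. U (x ! k) (z ! k)) * (\<Prod>k\<in>S. if z ! k = d then 1 else 0) = (\<Prod>k<?n. f k (z ! k))"
      unfolding f_def by (simp add: prod.distrib)
  qed
  also have "\<dots> = (\<Prod>k<?n. \<Sum>c<q. f k c)" by (rule sum_words_prod)
  also have "\<dots> = (\<Prod>k<?n. if k \<in> S then U (x ! k) d else 1)"
  proof (rule prod.cong[OF refl])
    fix k assume k: "k \<in> {..<?n}"
    hence xk: "x ! k < q" using x by (auto simp: subset_iff)
    show "(\<Sum>c<q. f k c) = (if k \<in> S then U (x ! k) d else 1)"
    proof (cases "k \<in> S")
      case True
      have "(\<Sum>c<q. f k c) = (\<Sum>c<q. if c = d then U (x ! k) d else 0)"
        unfolding f_def using True by (intro sum.cong) auto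
      also have "\<dots> = (if d < q then U (x ! k) d else 0)" by (simp add: sum.delta)
      finally show ?thesis using True d by simp
    next
      case False thus ?thesis unfolding f_def using usum[OF xk] by simp
    qed
  qed
  also have "\<dots> = (\<Prod>k\<in>S. U (x ! k) d)"
    using S prod.inter_restrict[of "{..<?n}" "\<lambda>k. U (x ! k) d" S] by (simp add: Int_absorb1)
  finally show ?thesis .
qed


lemma EE_one: "set x \<subseteq> {..<q} \<Longrightarrow> EE q U x (\<lambda>z. 1) = 1"
  using EE_prod_ind[of x "{}" 0] by (cases "q = 0") (auto simp: EE_def words_def)

lemma EE_ind:
  assumes "set x \<subseteq> {..<q}" "i < length x" "d < q"
  shows "EE q U x (\<lambda>z. if z ! i = d then 1 else 0) = U (x ! i) d"
  using EE_prod_ind[of x "{i}" d] assms by simp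

lemma EE_ind2:
  assumes "set x \<subseteq> {..<q}" "i < length x" "j < length x" "i \<noteq> j" "d < q"
  shows "EE q U x (\<lambda>z. (if z ! i = d then 1 else 0) * (if z ! j = d then 1 else 0)) = U (x ! i) d * U (x ! j) d"
  using EE_prod_ind[of x "{i,j}" d] assms by simp

lemma two_abs_le: "s > 0 \<Longrightarrow> 2 * \<bar>X\<bar> \<le> s * X\<^sup>2 + 1 / (s::real)"
proof -
  assume s: "s > 0"
  have "0 \<le> (s * \<bar>X\<bar> - 1)\<^sup>2" by simp
  hence "2 * s * \<bar>X\<bar> \<le> s\<^sup>2 * X\<^sup>2 + 1" by (simp add: power2_eq_square algebra_simps)
  hence "2 * \<bar>X\<bar> \<le> (s\<^sup>2 * X\<^sup>2 + 1) / s" using s by (simp add: field_simps)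
  also have "\<dots> = s * X\<^sup>2 + 1 / s" using s by (simp add: field_simps power2_eq_square)
  finally show ?thesis .
qed

lemma moment_bound:
  assumes x: "set x \<subseteq> {..<q}" and a: "a < q" and d: "d < q"
    and G: "G = {i. i < length x \<and> x ! i = a}" and m: "card G = m" "m > 0"
  shows "EE q U x (\<lambda>z. \<bar>(\<Sum>i\<in>G. if z ! i = d then 1 else 0) / (m * U a d) - 1\<bar>)
           \<le> (1 / u + 1) / (2 * sqrt m)"
proof -
  define \<pi> where "\<pi> = U a d"
  have \<pi>pos: "\<pi> > 0" and \<pi>u: "\<pi> \<ge> u" using U_pos[OF a d] ulow[OF a d] unfolding \<pi>_def by auto
  define ind where "ind i z = (if z ! i = d then 1 else (0::real))" for i z
  define N where "N z = (\<Sum>i\<in>G. ind i z)" for z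
  have finG: "finite G" unfolding G by simp
  have Gsub: "\<And>i. i \<in> G \<Longrightarrow> i < length x \<and> x ! i = a" unfolding G by auto
  have Eind: "EE q U x (ind i) = \<pi>" if "i \<in> G" for i
    using EE_ind[OF x _ d, of i] Gsub[OF that] unfolding ind_def \<pi>_def by simp
  have EN: "EE q U x N = m * \<pi>"
    unfolding N_def EE_sum using Eind m by simp
  have Eij: "(\<Sum>j\<in>G. EE q U x (\<lambda>z. ind i z * ind j z)) = \<pi> + (m - 1) * \<pi>\<^sup>2" if i: "i \<in> G" for i
  proof -
    have "(\<Sum>j\<in>G. EE q U x (\<lambda>z. ind i z * ind j z))
        = EE q U x (\<lambda>z. ind i z * ind i z) + (\<Sum>j\<in>G-{i}. EE q U x (\<lambda>z. ind i z * ind j z))"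
      using i finG by (simp add: sum.remove)
    also have "EE q U x (\<lambda>z. ind i z * ind i z) = \<pi>"
      using Eind[OF i] unfolding ind_def by (simp add: if_distrib cong: if_cong)
    also have "(\<Sum>j\<in>G-{i}. EE q U x (\<lambda>z. ind i z * ind j z)) = (\<Sum>j\<in>G-{i}. \<pi>\<^sup>2)"
    proof (rule sum.cong[OF refl])
      fix j assume j: "j \<in> G - {i}"
      show "EE q U x (\<lambda>z. ind i z * ind j z) = \<pi>\<^sup>2"
        using EE_ind2[OF x _ _ _ d, of i j] Gsub[OF i] Gsub[of j] j unfolding ind_def \<pi>_def
        by (simp add: power2_eq_square)
    qed
    also have "\<dots> = (m - 1) * \<pi>\<^sup>2" using i finG m by (simp add: of_nat_diff)
    finally show ?thesis .
  qed
  have EN2: "EE q U x (\<lambda>z. (N z)\<^sup>2) = m * (\<pi> + (m - 1) * \<pi>\<^sup>2)"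
  proof -
    have "EE q U x (\<lambda>z. (N z)\<^sup>2) = EE q U x (\<lambda>z. \<Sum>i\<in>G. \<Sum>j\<in>G. ind i z * ind j z)"
      unfolding N_def power2_eq_square sum_product ..
    also have "\<dots> = (\<Sum>i\<in>G. \<Sum>j\<in>G. EE q U x (\<lambda>z. ind i z * ind j z))"
      by (simp add: EE_sum)
    also have "\<dots> = (\<Sum>i\<in>G. \<pi> + (m - 1) * \<pi>\<^sup>2)" using Eij by simp
    also have "\<dots> = m * (\<pi> + (m - 1) * \<pi>\<^sup>2)" using m by simp
    finally show ?thesis .
  qed
  define X where "X z = N z / (m * \<pi>) - 1" for z
  have "EE q U x (\<lambda>z. (X z)\<^sup>2) = EE q U x (\<lambda>z. (1 / (m * \<pi>)\<^sup>2) * (N z)\<^sup>2 - (2 / (m * \<pi>)) * N z + 1)"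
    unfolding X_def using m \<pi>pos by (intro arg_cong[where f = "EE q U x"]) (simp add: fun_eq_iff power2_eq_square field_simps)
  also have "\<dots> = (1 / (m * \<pi>)\<^sup>2) * (m * (\<pi> + (m - 1) * \<pi>\<^sup>2)) - (2 / (m * \<pi>)) * (m * \<pi>) + 1"
    by (simp only: EE_add EE_diff EE_scale EN EN2 EE_one[OF x])
  also have "\<dots> = 1 / (m * \<pi>) - 1 / m"
    using m \<pi>pos by (simp add: field_simps power2_eq_square)
  also have "\<dots> \<le> 1 / (m * \<pi>)" using m by simp
  finally have EX2: "EE q U x (\<lambda>z. (X z)\<^sup>2) \<le> 1 / (m * \<pi>)" .
  have sm: "sqrt m > 0" using m by simp
  have pw: "\<bar>X z\<bar> \<le> (1/2) * (sqrt m * (X z)\<^sup>2) + (1/2) * (1 / sqrt m)" for z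
    using two_abs_le[OF sm, of "X z"] by linarith
  have "EE q U x (\<lambda>z. \<bar>X z\<bar>) \<le> EE q U x (\<lambda>z. (1/2) * (sqrt m * (X z)\<^sup>2) + (1/2) * (1 / sqrt m))"
    using x pw by (rule EE_mono)
  also have "\<dots> = (1/2) * (sqrt m * EE q U x (\<lambda>z. (X z)\<^sup>2)) + (1/2) * (1 / sqrt m)"
    using EE_add[of q U x "\<lambda>z. (1/2) * (sqrt m * (X z)\<^sup>2)" "\<lambda>z. (1/2) * (1 / sqrt m)"]
      EE_scale[of q U x "1/2" "\<lambda>z. sqrt m * (X z)\<^sup>2"] EE_scale[of q U x "sqrt m" "\<lambda>z. (X z)\<^sup>2"]
      EE_scale[of q U x "(1/2) * (1 / sqrt m)" "\<lambda>z. 1"] EE_one[OF x]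
    by simp
  also have "\<dots> \<le> (1/2) * (sqrt m * (1 / (m * \<pi>))) + (1/2) * (1 / sqrt m)"
    using mult_left_mono[OF EX2, of "sqrt m"] sm by simp
  also have "sqrt m * (1 / (m * \<pi>)) = (1 / \<pi>) / sqrt m"
    using m \<pi>pos by (simp add: field_simps)
  also have "(1/2) * ((1 / \<pi>) / sqrt m) + (1/2) * (1 / sqrt m) = (1 / \<pi> + 1) / (2 * sqrt m)"
    using sm \<pi>pos by (simp add: field_simps)
  also have "\<dots> \<le> (1 / u + 1) / (2 * sqrt m)"
    using \<pi>u upos sm by (intro divide_right_mono add_right_mono) (auto simp: frac_le)
  finally show ?thesis unfolding X_def N_def ind_def \<pi>_def .
qed


lemma swap_ind:
  assumes len: "length x = n" and i: "i < n" and xi: "x ! i = x ! 0"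
  shows "(\<Sum>z\<in>W q n w. (\<Prod>k<n. U (x ! k) (z ! k)) * (if z ! i = d then 1 else 0))
       = (\<Sum>z\<in>W q n w. (\<Prod>k<n. U (x ! k) (z ! k)) * (if z ! 0 = d then 1 else 0))"
proof -
  define \<sigma> where "\<sigma> = Transposition.transpose 0 i"
  have n0: "0 < n" using i by simp
  have p: "\<sigma> permutes {..<n}" unfolding \<sigma>_def using i n0 by (intro permutes_swap_id) auto
  have xs: "x ! \<sigma> k = x ! k" for k unfolding \<sigma>_def using xi by (auto simp: Transposition.transpose_def)
  have "(\<Sum>z\<in>W q n w. (\<Prod>k<n. U (x ! k) (z ! k)) * (if z ! 0 = d then 1 else 0))
      = (\<Sum>z\<in>W q n w. (\<Prod>k<n. U (x ! k) (permute_list \<sigma> z ! k)) * (if permute_list \<sigma> z ! 0 = d then 1 else 0))"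
    by (rule perm_W[OF p])
  also have "\<dots> = (\<Sum>z\<in>W q n w. (\<Prod>k<n. U (x ! \<sigma> k) (z ! \<sigma> k)) * (if z ! i = d then 1 else 0))"
  proof (rule sum.cong[OF refl])
    fix z assume z: "z \<in> W q n w"
    hence lz: "length z = n" unfolding W_def words_def by simp
    have pz: "\<sigma> permutes {..<length z}" using p lz by simp
    have "(\<Prod>k<n. U (x ! k) (permute_list \<sigma> z ! k)) = (\<Prod>k<n. U (x ! \<sigma> k) (z ! \<sigma> k))"
      using pz lz by (intro prod.cong) (auto simp: permute_list_nth xs)
    moreover have "permute_list \<sigma> z ! 0 = z ! i" using pz lz n0 by (simp add: permute_list_nth \<sigma>_def)
    ultimately show "(\<Prod>k<n. U (x ! k) (permute_list \<sigma> z ! k)) * (if permute_list \<sigma> z ! 0 = d then 1 else 0)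
        = (\<Prod>k<n. U (x ! \<sigma> k) (z ! \<sigma> k)) * (if z ! i = d then 1 else 0)" by simp
  qed
  also have "\<dots> = (\<Sum>z\<in>W q n w. (\<Prod>k<n. U (x ! k) (z ! k)) * (if z ! i = d then 1 else 0))"
    using prod.permute[OF p, of "\<lambda>k. U (x ! k) (_ ! k)"] by (simp add: comp_def)
  finally show ?thesis by simp
qed

definition FF :: "nat list \<Rightarrow> nat \<Rightarrow> (nat \<Rightarrow> nat) \<Rightarrow> real" where
  "FF r d w = (if w d > 0 then PP q U r (w(d := w d - 1)) else 0)"

lemma first_ind:
  assumes d: "d < q"
  shows "(\<Sum>z\<in>W q (Suc (length r)) w. (\<Prod>k<Suc (length r). U ((a # r) ! k) (z ! k)) * (if z ! 0 = d then 1 else 0))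
       = U a d * FF r d w"
proof -
  have "(\<Sum>z\<in>W q (Suc (length r)) w. (\<Prod>k<Suc (length r). U ((a # r) ! k) (z ! k)) * (if z ! 0 = d then 1 else 0))
     = (\<Sum>d'<q. if d' = d then (if w d > 0 then U a d * PP q U r (w(d := w d - 1)) else 0) else 0)"
    unfolding W_Suc_sum
  proof (rule sum.cong[OF refl])
    fix d' assume "d' \<in> {..<q}"
    show "(if 0 < w d' then \<Sum>z\<in>W q (length r) (w(d' := w d' - 1)).
               (\<Prod>k<Suc (length r). U ((a # r) ! k) ((d' # z) ! k)) * (if (d' # z) ! 0 = d then 1 else 0) else 0)
        = (if d' = d then (if w d > 0 then U a d * PP q U r (w(d := w d - 1)) else 0) else 0)"
      unfolding PP_def
      by (simp del: prod.lessThan_Suc add: prod.lessThan_Suc_shift sum_distrib_left)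
  qed
  also have "\<dots> = U a d * FF r d w" using d unfolding FF_def by (simp add: sum.delta)
  finally show ?thesis .
qed

lemma FF_repr:
  assumes x: "x = a # r" and d: "d < q"
    and G: "G = {i. i < length x \<and> x ! i = a}"
  shows "(\<Sum>z\<in>W q (length x) w. (\<Prod>k<length x. U (x ! k) (z ! k)) * (\<Sum>i\<in>G. if z ! i = d then 1 else 0))
       = card G * (U a d * FF r d w)"
proof -
  let ?n = "length x"
  have "(\<Sum>z\<in>W q ?n w. (\<Prod>k<?n. U (x ! k) (z ! k)) * (\<Sum>i\<in>G. if z ! i = d then 1 else 0))
      = (\<Sum>i\<in>G. \<Sum>z\<in>W q ?n w. (\<Prod>k<?n. U (x ! k) (z ! k)) * (if z ! i = d then 1 else 0))"
    by (simp add: sum_distrib_left sum.swap[of _ G])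
  also have "\<dots> = (\<Sum>i\<in>G. \<Sum>z\<in>W q ?n w. (\<Prod>k<?n. U (x ! k) (z ! k)) * (if z ! 0 = d then 1 else 0))"
    by (rule sum.cong[OF refl], rule swap_ind) (auto simp: G x)
  also have "\<dots> = card G * (U a d * FF r d w)"
    using first_ind[OF d, where r=r and w=w and a=a] x by simp
  finally show ?thesis .
qed


lemma shift_bound:
  assumes x: "x = a # r" and xq: "set x \<subseteq> {..<q}" and d: "d < q" and e: "e < q"
    and G: "G = {i. i < length x \<and> x ! i = a}"
  shows "(\<Sum>w\<in>comps q (length x). \<bar>FF r d w - FF r e w\<bar>) \<le> (1 / u + 1) / sqrt (card G)"
proof -
  let ?n = "length x"
  define m where "m = card G"
  have a: "a < q" using xq x by auto
  have "0 \<in> G" using G x by simp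
  hence m: "m > 0" unfolding m_def G by (auto simp: card_gt_0_iff)
  define Pi where "Pi z = (\<Prod>k<?n. U (x ! k) (z ! k))" for z
  define N where "N (c::nat) (z::nat list) = (\<Sum>i\<in>G. if z ! i = c then 1 else (0::real))" for c z
  define Y where "Y z = N d z / (m * U a d) - N e z / (m * U a e)" for z
  have pd: "U a d > 0" and pe: "U a e > 0" using U_pos a d e by auto
  have FFr: "FF r c w = (\<Sum>z\<in>W q ?n w. Pi z * (N c z / (m * U a c)))" if c: "c < q" for c w
  proof -
    have pc: "U a c > 0" using U_pos a c by auto
    have "(\<Sum>z\<in>W q ?n w. Pi z * N c z) = m * (U a c * FF r c w)"
      unfolding Pi_def N_def m_def by (rule FF_repr[OF x c G])
    hence "(\<Sum>z\<in>W q ?n w. Pi z * N c z) / (m * U a c) = FF r c w" using m pc by (simp add: field_simps)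
    thus ?thesis by (simp add: sum_divide_distrib[symmetric] mult.assoc[symmetric] times_divide_eq_right)
  qed
  have Ytri: "\<bar>Y z\<bar> \<le> \<bar>N d z / (m * U a d) - 1\<bar> + \<bar>N e z / (m * U a e) - 1\<bar>" for z
  proof -
    have "Y z = (N d z / (m * U a d) - 1) - (N e z / (m * U a e) - 1)" unfolding Y_def by simp
    thus ?thesis by (simp only: abs_triangle_ineq4)
  qed
  have Wsub: "z \<in> words q ?n" if "z \<in> W q ?n w" for z w using that unfolding W_def by simp
  have "(\<Sum>w\<in>comps q ?n. \<bar>FF r d w - FF r e w\<bar>) = (\<Sum>w\<in>comps q ?n. \<bar>\<Sum>z\<in>W q ?n w. Pi z * Y z\<bar>)"
    unfolding FFr[OF d] FFr[OF e] Y_def by (simp add: sum_subtractf right_diff_distrib)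
  also have "\<dots> \<le> (\<Sum>w\<in>comps q ?n. \<Sum>z\<in>W q ?n w. Pi z * \<bar>Y z\<bar>)"
  proof (rule sum_mono)
    fix w
    have "\<bar>\<Sum>z\<in>W q ?n w. Pi z * Y z\<bar> \<le> (\<Sum>z\<in>W q ?n w. \<bar>Pi z * Y z\<bar>)" by (rule sum_abs)
    also have "\<dots> = (\<Sum>z\<in>W q ?n w. Pi z * \<bar>Y z\<bar>)"
      using weight_nonneg[OF xq] Wsub unfolding Pi_def by (intro sum.cong) (auto simp: abs_mult)
    finally show "\<bar>\<Sum>z\<in>W q ?n w. Pi z * Y z\<bar> \<le> (\<Sum>z\<in>W q ?n w. Pi z * \<bar>Y z\<bar>)" .
  qed
  also have "\<dots> = (\<Sum>z\<in>words q ?n. Pi z * \<bar>Y z\<bar>)"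
    unfolding W_def using sum.group[OF finite_words finite_comps, of composition q ?n q ?n "\<lambda>z. Pi z * \<bar>Y z\<bar>"]
      composition_in_comps by blast
  also have "\<dots> = EE q U x (\<lambda>z. \<bar>Y z\<bar>)" unfolding EE_def Pi_def ..
  also have "\<dots> \<le> EE q U x (\<lambda>z. \<bar>N d z / (m * U a d) - 1\<bar> + \<bar>N e z / (m * U a e) - 1\<bar>)"
    using xq Ytri by (rule EE_mono)
  also have "\<dots> = EE q U x (\<lambda>z. \<bar>N d z / (m * U a d) - 1\<bar>) + EE q U x (\<lambda>z. \<bar>N e z / (m * U a e) - 1\<bar>)"
    by (rule EE_add)
  also have "\<dots> \<le> (1 / u + 1) / (2 * sqrt m) + (1 / u + 1) / (2 * sqrt m)"
    using moment_bound[OF xq a d G m_def[symmetric] m] moment_bound[OF xq a e G m_def[symmetric] m]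
    unfolding N_def by (rule add_mono)
  also have "\<dots> = (1 / u + 1) / sqrt m" by simp
  finally show ?thesis unfolding m_def .
qed


lemma card_G_count: "card {i. i < length x \<and> x ! i = c} = count_list x c"
  unfolding count_list_eq_length_filter length_filter_conv_card by metis

lemma PP_Cons_FF: "PP q U (c # r) w = (\<Sum>d<q. U c d * FF r d w)"
  unfolding PP_Cons FF_def ..

lemma unit_move_words:
  assumes r: "r \<in> words q n'" and a: "a < q" and b: "b < q" and q0: "q > 0"
  shows "(\<Sum>w\<in>comps q (Suc n'). \<bar>PP q U (a # r) w - PP q U (b # r) w\<bar>)
         \<le> (1 / u + 1) * sqrt q / sqrt (Suc n')"
proof -
  let ?n = "Suc n'"
  have rq: "set r \<subseteq> {..<q}" and lr: "length r = n'" using r unfolding words_def by auto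
  define f where "f c = count_list r c" for c
  obtain c where c: "c \<in> {..<q}" "f c = Max (f ` {..<q})"
  proof -
    have "Max (f ` {..<q}) \<in> f ` {..<q}" using q0 by (intro Max_in) auto
    thus ?thesis using that by (metis imageE)
  qed
  have cmax: "f c' \<le> f c" if "c' < q" for c' using c that by simp
  define x where "x = c # r"
  have xq: "set x \<subseteq> {..<q}" using rq c unfolding x_def by auto
  have lx: "length x = ?n" unfolding x_def using lr by simp
  define G where "G = {i. i < length x \<and> x ! i = c}"
  have cardG: "card G = f c + 1" unfolding G_def card_G_count f_def x_def by simp
  have "?n = (\<Sum>c'<q. count_list x c')" using sum_count_set[OF xq] lx by simp
  also have "\<dots> \<le> (\<Sum>c'<q. card G)"
  proof (rule sum_mono)
    fix c' assume "c' \<in> {..<q}"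
    thus "count_list x c' \<le> card G" using cmax[of c'] unfolding cardG x_def f_def by auto
  qed
  also have "\<dots> = q * card G" by simp
  finally have nqm: "?n \<le> q * card G" .
  have mpos: "card G > 0" using cardG by simp
  define B where "B = (1 / u + 1) / sqrt (card G)"
  have SB: "(\<Sum>w\<in>comps q ?n. \<bar>FF r d w - FF r e w\<bar>) \<le> B" if "d < q" "e < q" for d e
    using shift_bound[OF x_def xq that G_def] lx unfolding B_def by simp
  have Ua: "(\<Sum>d<q. U a d) = 1" and Ub: "(\<Sum>e<q. U b e) = 1" using usum a b by auto
  have diff: "PP q U (a # r) w - PP q U (b # r) w = (\<Sum>d<q. \<Sum>e<q. U a d * U b e * (FF r d w - FF r e w))" for w
  proof -
    have "(\<Sum>d<q. \<Sum>e<q. U a d * U b e * (FF r d w - FF r e w))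
        = (\<Sum>d<q. \<Sum>e<q. U b e * (U a d * FF r d w)) - (\<Sum>d<q. \<Sum>e<q. U a d * (U b e * FF r e w))"
      by (simp add: sum_subtractf algebra_simps)
    also have "\<dots> = (\<Sum>d<q. U a d * FF r d w) - (\<Sum>e<q. U b e * FF r e w)"
      using Ua Ub by (simp add: sum_distrib_right[symmetric] sum_distrib_left[symmetric])
    finally show ?thesis unfolding PP_Cons_FF by simp
  qed
  have Unn: "d < q \<Longrightarrow> e < q \<Longrightarrow> U a d * U b e \<ge> 0" for d e using U_pos a b
    by (simp add: less_imp_le)
  have "(\<Sum>w\<in>comps q ?n. \<bar>PP q U (a # r) w - PP q U (b # r) w\<bar>)
      \<le> (\<Sum>w\<in>comps q ?n. \<Sum>d<q. \<Sum>e<q. U a d * U b e * \<bar>FF r d w - FF r e w\<bar>)"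
  proof (rule sum_mono)
    fix w
    have "\<bar>\<Sum>d<q. \<Sum>e<q. U a d * U b e * (FF r d w - FF r e w)\<bar>
        \<le> (\<Sum>d<q. \<bar>\<Sum>e<q. U a d * U b e * (FF r d w - FF r e w)\<bar>)" by (rule sum_abs)
    also have "\<dots> \<le> (\<Sum>d<q. \<Sum>e<q. \<bar>U a d * U b e * (FF r d w - FF r e w)\<bar>)"
      by (intro sum_mono sum_abs)
    also have "\<dots> = (\<Sum>d<q. \<Sum>e<q. U a d * U b e * \<bar>FF r d w - FF r e w\<bar>)"
      using U_pos a b by (intro sum.cong refl) (simp add: abs_mult less_imp_le)
    finally show "\<bar>PP q U (a # r) w - PP q U (b # r) w\<bar> \<le> (\<Sum>d<q. \<Sum>e<q. U a d * U b e * \<bar>FF r d w - FF r e w\<bar>)"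
      unfolding diff .
  qed
  also have "\<dots> = (\<Sum>d<q. \<Sum>e<q. U a d * U b e * (\<Sum>w\<in>comps q ?n. \<bar>FF r d w - FF r e w\<bar>))"
    by (simp add: sum.swap[of _ "comps q ?n"] sum_distrib_left)
  also have "\<dots> \<le> (\<Sum>d<q. \<Sum>e<q. U a d * U b e * B)"
    using SB Unn by (intro sum_mono mult_left_mono) auto
  also have "\<dots> = B" using Ua Ub by (simp add: sum_distrib_right[symmetric] sum_distrib_left[symmetric])
  also have "\<dots> \<le> (1 / u + 1) * sqrt q / sqrt ?n"
  proof -
    have "sqrt ?n \<le> sqrt q * sqrt (card G)"
    proof -
      have "real ?n \<le> real q * real (card G)" using nqm by (metis of_nat_le_iff of_nat_mult)
      thus ?thesis by (simp add: real_sqrt_mult[symmetric] del: of_nat_Suc)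
    qed
    hence "1 / sqrt (card G) \<le> sqrt q / sqrt ?n"
      using mpos by (simp add: field_simps)
    moreover have "1 / u + 1 \<ge> 0" using upos by simp
    ultimately show ?thesis unfolding B_def
      using mult_left_mono[of "1 / sqrt (card G)" "sqrt q / sqrt ?n" "1 / u + 1"] by simp
  qed
  finally show ?thesis .
qed


definition Dh :: "nat \<Rightarrow> (nat \<Rightarrow> nat) \<Rightarrow> (nat \<Rightarrow> nat) \<Rightarrow> real" where
  "Dh n t t' = (\<Sum>w\<in>comps q n. \<bar>ncc q n U w t - ncc q n U w t'\<bar>)"

lemma Dh_triangle: "Dh n t t' \<le> Dh n t t'' + Dh n t'' t'"
  unfolding Dh_def sum.distrib[symmetric] by (rule sum_mono) linarith

lemma Dh_refl: "Dh n t t = 0" unfolding Dh_def by simp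

lemma sum_dec:
  fixes t :: "nat \<Rightarrow> nat"
  assumes "a < q" "t a > 0"
  shows "(\<Sum>i<q. (t(a := t a - 1)) i) + 1 = (\<Sum>i<q. t i)"
proof -
  have "(\<Sum>i<q. t i) = t a + (\<Sum>i\<in>{..<q}-{a}. t i)" using assms by (simp add: sum.remove)
  moreover have "(\<Sum>i<q. (t(a := t a - 1)) i) = (t a - 1) + (\<Sum>i\<in>{..<q}-{a}. (t(a := t a - 1)) i)"
    using assms by (simp add: sum.remove)
  moreover have "(\<Sum>i\<in>{..<q}-{a}. (t(a := t a - 1)) i) = (\<Sum>i\<in>{..<q}-{a}. t i)" by (rule sum.cong) auto
  ultimately show ?thesis using assms by (simp del: fun_upd_apply)
qed

lemma unit_move_comp:
  assumes t: "t \<in> comps q n" and a: "a < q" and b: "b < q" and ta: "t a > 0"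
    and t': "t' = (t(a := t a - 1))(b := (t(a := t a - 1)) b + 1)"
  shows "t' \<in> comps q n \<and> Dh n t t' \<le> (1 / u + 1) * sqrt q / sqrt n"
proof -
  define s where "s = t(a := t a - 1)"
  have q0: "q > 0" using a by simp
  have st: "(\<Sum>i<q. s i) + 1 = n" using sum_dec[where a=a and t=t, OF a ta] t unfolding s_def comps_def by simp
  then obtain n' where n': "n = Suc n'" by (cases n) auto
  have sc: "s \<in> comps q n'" using st t n' unfolding comps_def s_def using a by auto
  obtain r where r: "r \<in> words q n'" "composition r = s" using sc by (rule exists_word_comps)
  have y: "a # r \<in> words q n" and y': "b # r \<in> words q n" using r a b n' unfolding words_def by auto
  have cy: "composition (a # r) = t" unfolding composition_Cons r(2) s_def using ta
    by (auto simp: fun_eq_iff)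
  have cy': "composition (b # r) = t'" unfolding composition_Cons r(2) t' s_def ..
  have t'c: "t' \<in> comps q n" using composition_in_comps[OF y'] cy' by simp
  have "Dh n t t' = (\<Sum>w\<in>comps q (Suc n'). \<bar>PP q U (a # r) w - PP q U (b # r) w\<bar>)"
    unfolding Dh_def using ncc_PP[OF t y cy] ncc_PP[OF t'c y' cy'] n' by simp
  also have "\<dots> \<le> (1 / u + 1) * sqrt q / sqrt (Suc n')"
    by (rule unit_move_words[OF r(1) a b q0])
  finally show ?thesis using t'c n' by simp
qed


lemma comps_le_eq:
  assumes t: "t \<in> comps q n" and t': "t' \<in> comps q n" and le: "\<And>i. i < q \<Longrightarrow> t i \<le> t' i"
  shows "t = t'"
proof
  fix i
  have "(\<Sum>i<q. t' i - t i) = (\<Sum>i<q. t' i) - (\<Sum>i<q. t i)" using le by (intro sum_subtractf_nat) auto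
  also have "\<dots> = 0" using t t' unfolding comps_def by simp
  finally have z: "\<forall>i\<in>{..<q}. t' i - t i = 0" by simp
  show "t i = t' i"
  proof (cases "i < q")
    case True
    hence "t' i - t i = 0" using z by simp
    thus ?thesis using le[OF True] by simp
  next
    case False thus ?thesis using t t' unfolding comps_def by simp
  qed
qed

lemma path_bound:
  assumes "t \<in> comps q n" "t' \<in> comps q n" "(\<Sum>i<q. t i - t' i) = k"
  shows "Dh n t t' \<le> (1 / u + 1) * sqrt q / sqrt n * k"
  using assms
proof (induction k arbitrary: t)
  case 0
  hence "\<And>i. i < q \<Longrightarrow> t i \<le> t' i" by (simp add: sum_eq_0_iff)
  hence "t = t'" using comps_le_eq "0.prems" by blast
  thus ?case by (simp add: Dh_refl)
next
  case (Suc k)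
  note t = Suc.prems(1) and t' = Suc.prems(2)
  have "\<exists>a<q. t a > t' a"
  proof (rule ccontr)
    assume "\<not> ?thesis"
    hence "(\<Sum>i<q. t i - t' i) = 0" by (intro sum.neutral) auto
    thus False using Suc.prems(3) by simp
  qed
  then obtain a where a: "a < q" "t a > t' a" by blast
  have "\<exists>b<q. t b < t' b"
  proof (rule ccontr)
    assume "\<not> ?thesis"
    hence "t' = t" using comps_le_eq[OF t' t] by (meson not_less)
    hence "(\<Sum>i<q. t i - t' i) = 0" by simp
    thus False using Suc.prems(3) by simp
  qed
  then obtain b where b: "b < q" "t b < t' b" by blast
  define t'' where "t'' = (t(a := t a - 1))(b := (t(a := t a - 1)) b + 1)"
  have ab: "a \<noteq> b" using a b by auto
  have um: "t'' \<in> comps q n \<and> Dh n t t'' \<le> (1 / u + 1) * sqrt q / sqrt n"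
    using unit_move_comp[OF t a(1) b(1) _ t''_def] a by simp
  define h where "h i = t i - t' i" for i
  have "(\<Sum>i<q. t'' i - t' i) = (\<Sum>i<q. (h(a := h a - 1)) i)"
    using ab a b unfolding t''_def h_def by (intro sum.cong) auto
  hence "(\<Sum>i<q. t'' i - t' i) + 1 = (\<Sum>i<q. h i)"
    using sum_dec[where a=a and t=h] a unfolding h_def by simp
  hence k: "(\<Sum>i<q. t'' i - t' i) = k" using Suc.prems(3) unfolding h_def by simp
  have "Dh n t t' \<le> Dh n t t'' + Dh n t'' t'" by (rule Dh_triangle)
  also have "\<dots> \<le> (1 / u + 1) * sqrt q / sqrt n + (1 / u + 1) * sqrt q / sqrt n * k"
    using um Suc.IH[OF _ t' k] by (intro add_mono) auto
  also have "\<dots> = (1 / u + 1) * sqrt q / sqrt n * Suc k" by (simp add: algebra_simps add_divide_distrib)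
  finally show ?case .
qed

lemma dc_eq:
  assumes t: "t \<in> comps q n" and t': "t' \<in> comps q n"
  shows "d_c q t t' = real (\<Sum>i<q. t i - t' i)"
proof -
  have ab: "\<bar>real (t i) - real (t' i)\<bar> = 2 * real (t i - t' i) - (real (t i) - real (t' i))" for i
    by (cases "t i \<le> t' i") (auto simp: of_nat_diff)
  have "(\<Sum>i<q. real (t i)) = real (\<Sum>i<q. t i)" by simp
  also have "\<dots> = real (\<Sum>i<q. t' i)" using t t' unfolding comps_def by simp
  also have "\<dots> = (\<Sum>i<q. real (t' i))" by simp
  finally have z: "(\<Sum>i<q. real (t i)) = (\<Sum>i<q. real (t' i))" .
  show ?thesis unfolding d_c_def ab sum_subtractf using z by (simp add: sum_distrib_left[symmetric])
qed


lemma Dh_dc: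
  assumes "t \<in> comps q n" "t' \<in> comps q n"
  shows "Dh n t t' \<le> (1 / u + 1) * sqrt q / sqrt n * d_c q t t'"
  using path_bound[OF assms refl] dc_eq[OF assms] by simp

lemma main_bound:
  assumes k: "\<forall>i<k. ts i \<in> comps q n \<and> ts' i \<in> comps q n \<and> p i \<ge> 0"
    and Q: "\<forall>t\<in>comps q n. Q2 t = Q1 t + (\<Sum>i<k. p i * ((if t = ts' i then 1 else 0) - (if t = ts i then 1 else 0)))"
  shows "d_tv q n (ncc_output q n U Q1) (ncc_output q n U Q2)
         \<le> (1/2) * ((1 / u + 1) * sqrt q / sqrt n * (\<Sum>i<k. p i * d_c q (ts i) (ts' i)))"
proof -
  let ?K = "(1 / u + 1) * sqrt q / sqrt n"
  have diff: "ncc_output q n U Q1 w - ncc_output q n U Q2 w = (\<Sum>i<k. p i * (ncc q n U w (ts i) - ncc q n U w (ts' i)))" for w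
  proof -
    have "ncc_output q n U Q1 w - ncc_output q n U Q2 w
        = (\<Sum>t\<in>comps q n. (\<Sum>i<k. p i * ((if t = ts i then 1 else 0) - (if t = ts' i then 1 else 0))) * ncc q n U w t)"
      unfolding ncc_output_def sum_subtractf[symmetric]
    proof (rule sum.cong[OF refl])
      fix t assume t: "t \<in> comps q n"
      let ?S = "\<Sum>i<k. p i * ((if t = ts' i then 1 else 0) - (if t = ts i then 1 else 0))"
      have e1: "Q1 t - Q2 t = - ?S" using Q t by simp
      have e2: "(\<Sum>i<k. p i * ((if t = ts i then 1 else 0) - (if t = ts' i then 1 else 0))) = - ?S"
        by (simp add: sum_negf[symmetric] algebra_simps)
      show "Q1 t * ncc q n U w t - Q2 t * ncc q n U w t
          = (\<Sum>i<k. p i * ((if t = ts i then 1 else 0) - (if t = ts' i then 1 else 0))) * ncc q n U w t"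
        unfolding e2 e1[symmetric] by (simp add: left_diff_distrib)
    qed
    also have "\<dots> = (\<Sum>i<k. p i * ((\<Sum>t\<in>comps q n. (if t = ts i then ncc q n U w t else 0))
                                    - (\<Sum>t\<in>comps q n. (if t = ts' i then ncc q n U w t else 0))))"
    proof -
      have "(\<Sum>t\<in>comps q n. (\<Sum>i<k. p i * ((if t = ts i then 1 else 0) - (if t = ts' i then 1 else 0))) * ncc q n U w t)
          = (\<Sum>t\<in>comps q n. \<Sum>i<k. p i * ((if t = ts i then ncc q n U w t else 0) - (if t = ts' i then ncc q n U w t else 0)))"
        by (simp add: sum_distrib_right left_diff_distrib mult.assoc) (intro sum.cong refl, simp)
      also have "\<dots> = (\<Sum>i<k. \<Sum>t\<in>comps q n. p i * ((if t = ts i then ncc q n U w t else 0) - (if t = ts' i then ncc q n U w t else 0)))"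
        by (rule sum.swap)
      also have "\<dots> = (\<Sum>i<k. p i * ((\<Sum>t\<in>comps q n. (if t = ts i then ncc q n U w t else 0))
                                    - (\<Sum>t\<in>comps q n. (if t = ts' i then ncc q n U w t else 0))))"
        by (simp only: sum_distrib_left[symmetric] sum_subtractf)
      finally show ?thesis .
    qed
    also have "\<dots> = (\<Sum>i<k. p i * (ncc q n U w (ts i) - ncc q n U w (ts' i)))"
      using k finite_comps by (intro sum.cong refl) (simp add: sum.delta')
    finally show ?thesis .
  qed
  have "(\<Sum>w\<in>comps q n. \<bar>ncc_output q n U Q1 w - ncc_output q n U Q2 w\<bar>)
      \<le> (\<Sum>w\<in>comps q n. \<Sum>i<k. p i * \<bar>ncc q n U w (ts i) - ncc q n U w (ts' i)\<bar>)"
  proof (rule sum_mono)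
    fix w
    have "\<bar>\<Sum>i<k. p i * (ncc q n U w (ts i) - ncc q n U w (ts' i))\<bar>
        \<le> (\<Sum>i<k. \<bar>p i * (ncc q n U w (ts i) - ncc q n U w (ts' i))\<bar>)" by (rule sum_abs)
    also have "\<dots> = (\<Sum>i<k. p i * \<bar>ncc q n U w (ts i) - ncc q n U w (ts' i)\<bar>)"
      using k by (intro sum.cong refl) (simp add: abs_mult)
    finally show "\<bar>ncc_output q n U Q1 w - ncc_output q n U Q2 w\<bar>
        \<le> (\<Sum>i<k. p i * \<bar>ncc q n U w (ts i) - ncc q n U w (ts' i)\<bar>)" unfolding diff .
  qed
  also have "\<dots> = (\<Sum>i<k. p i * Dh n (ts i) (ts' i))"
    unfolding Dh_def by (simp add: sum.swap[of _ "comps q n"] sum_distrib_left)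
  also have "\<dots> \<le> (\<Sum>i<k. p i * (?K * d_c q (ts i) (ts' i)))"
    using k Dh_dc by (intro sum_mono mult_left_mono) auto
  also have "\<dots> = ?K * (\<Sum>i<k. p i * d_c q (ts i) (ts' i))"
    by (simp only: sum_distrib_left mult.left_commute)
  finally show ?thesis unfolding d_tv_def by simp
qed

end


theorem lemma5:
  fixes q :: nat and U :: "nat \<Rightarrow> nat \<Rightarrow> real"
  assumes "q \<ge> 2"
    and "\<And>a b. a < q \<Longrightarrow> b < q \<Longrightarrow> U a b > 0"
    and "\<And>a. a < q \<Longrightarrow> (\<Sum>b<q. U a b) = 1"
  shows "\<exists>C4::real. \<exists>N0::nat. \<forall>n\<ge>N0. \<forall>(k::nat) (ts::nat \<Rightarrow> nat \<Rightarrow> nat) (ts'::nat \<Rightarrow> nat \<Rightarrow> nat)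
           (p::nat \<Rightarrow> real) Q1 Q2.
     k \<ge> 1 \<longrightarrow>
     (\<forall>i<k. ts i \<in> comps q n \<and> ts' i \<in> comps q n \<and> p i \<ge> 0) \<longrightarrow>
     is_dist q n Q1 \<longrightarrow> is_dist q n Q2 \<longrightarrow>
     (\<forall>t\<in>comps q n. Q2 t = Q1 t + (\<Sum>i<k. p i * ((if t = ts' i then 1 else 0) - (if t = ts i then 1 else 0)))) \<longrightarrow>
     d_tv q n (ncc_output q n U Q1) (ncc_output q n U Q2)
       \<le> C4 * (log 2 (real n)) powr ((real q - 2) / 2) / sqrt (real n) * (\<Sum>i<k. p i * d_c q (ts i) (ts' i))"
proof -
  define S where "S = (\<lambda>(a, b). U a b) ` ({..<q} \<times> {..<q})"
  define u where "u = Min S"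
  have finS: "finite S" unfolding S_def by simp
  have "(0::nat, 0::nat) \<in> {..<q} \<times> {..<q}" using assms(1) by simp
  hence neS: "S \<noteq> {}" unfolding S_def by blast
  have "u \<in> S" unfolding u_def using finS neS by (rule Min_in)
  hence upos: "u > 0" unfolding S_def using assms(2) by auto
  have ulow: "u \<le> U a b" if "a < q" "b < q" for a b
    unfolding u_def using finS that by (intro Min_le) (auto simp: S_def)
  show ?thesis
  proof (intro exI[of _ "(1 / u + 1) * sqrt q"] exI[of _ "2::nat"] allI impI)
    fix n k :: nat and ts ts' :: "nat \<Rightarrow> nat \<Rightarrow> nat" and p :: "nat \<Rightarrow> real"
      and Q1 Q2 :: "(nat \<Rightarrow> nat) \<Rightarrow> real"
    assume n: "2 \<le> n" and k: "\<forall>i<k. ts i \<in> comps q n \<and> ts' i \<in> comps q n \<and> p i \<ge> 0"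
      and Q: "\<forall>t\<in>comps q n. Q2 t = Q1 t + (\<Sum>i<k. p i * ((if t = ts' i then 1 else 0) - (if t = ts i then 1 else 0)))"
    define K where "K = (1 / u + 1) * sqrt q / sqrt n"
    define L where "L = (log 2 (real n)) powr ((real q - 2) / 2)"
    define T where "T = (\<Sum>i<k. p i * d_c q (ts i) (ts' i))"
    have mb: "d_tv q n (ncc_output q n U Q1) (ncc_output q n U Q2) \<le> (1/2) * (K * T)"
      unfolding K_def T_def by (rule main_bound[OF upos ulow assms(3) k Q])
    have K0: "K \<ge> 0" unfolding K_def using upos by simp
    have T0: "T \<ge> 0" unfolding T_def d_c_def using k by (intro sum_nonneg mult_nonneg_nonneg) auto
    have "log 2 (real n) \<ge> 1" using n by simp
    hence L1: "L \<ge> 1" unfolding L_def using assms(1) by (intro ge_one_powr_ge_zero) auto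
    have "(1/2) * (K * T) \<le> K * T" using K0 T0 by simp
    also have "\<dots> \<le> K * L * T"
    proof -
      have "K * 1 \<le> K * L" using L1 K0 by (rule mult_left_mono)
      thus ?thesis using T0 by (simp add: mult_right_mono)
    qed
    finally show "d_tv q n (ncc_output q n U Q1) (ncc_output q n U Q2)
       \<le> (1 / u + 1) * sqrt q * L / sqrt n * T"
      using mb unfolding K_def by (simp add: field_simps)
  qed
qed

end
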